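(* Let $\Phi=\{\varphi_i\}_{i\in\Lambda}$ be a similarity IFS in $\mathbb{R}^d$ with contraction ratios $\{r_i\}_{i\in\Lambda}$ and attractor $K$, and let $r_{\min}=\min_ir_i$. Let $T$ be a tree with alphabet $\Lambda$ which is $(K,c)$-diffuse for some $c>0$. Then $\gamma_\Phi(\partial T)$ is hyperplane $c\,\frac{r_{\min}}{\operatorname{diam}(K)}$-diffuse.
   Context: A similarity IFS is a finite family of contracting similarities $\varphi_i$ of $\mathbb{R}^d$ with ratios $r_i\in(0,1)$; its attractor $K$ satisfies $K=\bigcup_i\varphi_iK$; $\varphi_{i_1\dots i_n}=\varphi_{i_1}\circ\cdots\circ\varphi_{i_n}$; $\gamma_\Phi(j)$ is the point of $\bigcap_n\varphi_{j_1\dots j_n}(K)$ for $j\in\Lambda^{\mathbb{N}}$. A tree is a prefix-closed set $T$ of finite words over $\Lambda$ containing the empty word; $W_T(i)=\{a\in\Lambda: ia\in T\}$; $\partial T$ = infinite words whose prefixes all lie in $T$. A finite set $A$ of words is $(K,c)$-diffuse if for every affine hyperplane $\mathcal{L}$ there is $j\in A$ with $\varphi_jK\cap\mathcal{L}^{(c)}=\emptyset$ ($\mathcal{L}^{(c)}$ the open $c$-neighborhood). $T$ is $(K,c)$-diffuse if $W_T(i)$ is $(K,c)$-diffuse for every $i\in T$. A closed set $E$ is hyperplane $\beta$-diffuse if there is $\xi_0>0$ such that for all $\xi\in(0,\xi_0)$, $x\in E$, and affine hyperplanes $\mathcal{L}$, $E\cap B_\xi(x)\setminus\mathcal{L}^{(\beta\xi)}\ne\emptyset$.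 *)

theory Defs
  imports "HOL-Analysis.Analysis"
begin

definition similarity_ifs :: "'i set \<Rightarrow> ('i \<Rightarrow> 'a::euclidean_space \<Rightarrow> 'a) \<Rightarrow> ('i \<Rightarrow> real) \<Rightarrow> bool" where
  "similarity_ifs L \<phi> r \<longleftrightarrow> finite L \<and> L \<noteq> {} \<and>
     (\<forall>i\<in>L. 0 < r i \<and> r i < 1 \<and> (\<forall>x y. dist (\<phi> i x) (\<phi> i y) = r i * dist x y))"

definition is_attractor :: "'i set \<Rightarrow> ('i \<Rightarrow> 'a::euclidean_space \<Rightarrow> 'a) \<Rightarrow> 'a set \<Rightarrow> bool" where
  "is_attractor L \<phi> K \<longleftrightarrow> compact K \<and> K \<noteq> {} \<and> K = (\<Union>i\<in>L. \<phi> i ` K)"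

definition word_map :: "('i \<Rightarrow> 'a \<Rightarrow> 'a) \<Rightarrow> 'i list \<Rightarrow> 'a \<Rightarrow> 'a" where
  "word_map \<phi> w = foldr (\<lambda>i f. \<phi> i \<circ> f) w id"

definition coding_map :: "('i \<Rightarrow> 'a \<Rightarrow> 'a) \<Rightarrow> 'a set \<Rightarrow> (nat \<Rightarrow> 'i) \<Rightarrow> 'a" where
  "coding_map \<phi> K j = (THE x. x \<in> (\<Inter>n. word_map \<phi> (map j [0..<n]) ` K))"

definition is_tree :: "'i set \<Rightarrow> 'i list set \<Rightarrow> bool" where
  "is_tree L T \<longleftrightarrow> [] \<in> T \<and> T \<subseteq> lists L \<and> (\<forall>w\<in>T. \<forall>n. take n w \<in> T)"

definition children :: "'i set \<Rightarrow> 'i list set \<Rightarrow> 'i list \<Rightarrow> 'i set" where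
  "children L T w = {a\<in>L. w @ [a] \<in> T}"

definition tree_boundary :: "'i set \<Rightarrow> 'i list set \<Rightarrow> (nat \<Rightarrow> 'i) set" where
  "tree_boundary L T = {j. (\<forall>n. j n \<in> L) \<and> (\<forall>n. map j [0..<n] \<in> T)}"

definition affine_hyperplane :: "'a::euclidean_space set \<Rightarrow> bool" where
  "affine_hyperplane H \<longleftrightarrow> (\<exists>a b. a \<noteq> 0 \<and> H = {x. a \<bullet> x = b})"

definition open_nbhd :: "'a::metric_space set \<Rightarrow> real \<Rightarrow> 'a set" where
  "open_nbhd S c = {x. \<exists>y\<in>S. dist x y < c}"

definition diffuse_words :: "('i \<Rightarrow> 'a::euclidean_space \<Rightarrow> 'a) \<Rightarrow> 'a set \<Rightarrow> real \<Rightarrow> 'i list set \<Rightarrow> bool" where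
  "diffuse_words \<phi> K c A \<longleftrightarrow> finite A \<and>
     (\<forall>H. affine_hyperplane H \<longrightarrow> (\<exists>j\<in>A. word_map \<phi> j ` K \<inter> open_nbhd H c = {}))"

definition diffuse_tree :: "'i set \<Rightarrow> ('i \<Rightarrow> 'a::euclidean_space \<Rightarrow> 'a) \<Rightarrow> 'a set \<Rightarrow> real \<Rightarrow> 'i list set \<Rightarrow> bool" where
  "diffuse_tree L \<phi> K c T \<longleftrightarrow>
     (\<forall>w\<in>T. diffuse_words \<phi> K c ((\<lambda>a. [a]) ` children L T w))"

definition hyperplane_diffuse :: "'a::euclidean_space set \<Rightarrow> real \<Rightarrow> bool" where
  "hyperplane_diffuse E \<beta> \<longleftrightarrow> closed E \<and> (\<exists>\<xi>0>0. \<forall>\<xi>. 0 < \<xi> \<and> \<xi> < \<xi>0 \<longrightarrow>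
     (\<forall>x\<in>E. \<forall>H. affine_hyperplane H \<longrightarrow> E \<inter> ball x \<xi> - open_nbhd H (\<beta> * \<xi>) \<noteq> {}))"

end

theory Submission
  imports Defs
begin


lemma sim_props:
  fixes f :: "'a::euclidean_space \<Rightarrow> 'a"
  assumes s: "s > 0" and d: "\<forall>x y. dist (f x) (f y) = s * dist x y"
  shows sim_linear: "linear (\<lambda>x. f x - f 0)" and sim_inj: "inj f"
    and sim_gsurj: "surj (\<lambda>x. f x - f 0)" and sim_surj: "surj f"
    and sim_cont: "continuous_on S f"
proof -
  let ?g = "\<lambda>x. f x - f 0"
  have g0: "?g 0 = 0" by simp
  have gd: "\<forall>x y. dist (?g x) (?g y) = s * dist x y" using d by (simp add: dist_norm)
  show lin: "linear ?g" by (rule scaling_linear[OF g0 gd])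
  show inj: "inj f"
  proof (rule injI)
    fix x y assume "f x = f y"
    then have "dist (f x) (f y) = 0" by simp
    then have "s * dist x y = 0" using d by simp
    thus "x = y" using s by simp
  qed
  have "inj ?g" using inj by (auto simp: inj_def)
  thus gs: "surj ?g" using linear_injective_imp_surjective[OF lin] by simp
  show "surj f"
  proof -
    have "\<exists>x. y = f x" for y
    proof -
      obtain x where "y - f 0 = ?g x" using surjD[OF gs, of "y - f 0"] by blast
      hence "y = f x" by simp
      thus ?thesis by blast
    qed
    thus ?thesis unfolding surj_def by blast
  qed
  have "continuous_on S ?g" using lin
    by (simp add: linear_continuous_on linear_conv_bounded_linear)
  hence c2: "continuous_on S (\<lambda>x. ?g x + f 0)" by (rule continuous_on_add[OF _ continuous_on_const])
  have e: "(\<lambda>x. ?g x + f 0) = f" by auto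
  show "continuous_on S f" using c2 unfolding e .
qed

lemma sim_hyper:
  fixes f :: "'a::euclidean_space \<Rightarrow> 'a"
  assumes s: "s > 0" and d: "\<forall>x y. dist (f x) (f y) = s * dist x y"
    and H: "affine_hyperplane H"
  shows "affine_hyperplane (f -` H)"
proof -
  let ?g = "\<lambda>x. f x - f 0"
  have lin: "linear ?g" and gs: "surj ?g" using sim_props[OF s d] by auto
  obtain a b where a: "a \<noteq> 0" and Hd: "H = {x. a \<bullet> x = b}"
    using H unfolding affine_hyperplane_def by blast
  have aw: "x \<bullet> adjoint ?g a = ?g x \<bullet> a" for x using adjoint_works[OF lin] .
  have eq: "f -` H = {x. adjoint ?g a \<bullet> x = b - a \<bullet> f 0}"
  proof -
    have "a \<bullet> f x = b \<longleftrightarrow> adjoint ?g a \<bullet> x = b - a \<bullet> f 0" for x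
      using aw[of x] by (auto simp: inner_commute inner_diff_left inner_diff_right algebra_simps)
    thus ?thesis using Hd by auto
  qed
  have "adjoint ?g a \<noteq> 0"
  proof
    assume z: "adjoint ?g a = 0"
    obtain x where "a = ?g x" using surjD[OF gs, of a] by blast
    hence "a \<bullet> a = 0" using aw[of x] z by (simp add: inner_commute)
    thus False using a by simp
  qed
  thus ?thesis unfolding affine_hyperplane_def using eq by blast
qed

lemma word_map_Nil[simp]: "word_map \<phi> [] = id" by (simp add: word_map_def)
lemma word_map_Cons[simp]: "word_map \<phi> (a # w) = \<phi> a \<circ> word_map \<phi> w" by (simp add: word_map_def)
lemma word_map_snoc: "word_map \<phi> (w @ [a]) = word_map \<phi> w \<circ> \<phi> a"
  by (induction w) (auto simp: word_map_def)

lemma word_sim: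
  assumes "similarity_ifs L \<phi> r" "set w \<subseteq> L"
  shows "\<forall>x y. dist (word_map \<phi> w x) (word_map \<phi> w y) = prod_list (map r w) * dist x y"
  using assms(2)
proof (induction w)
  case Nil then show ?case by simp
next
  case (Cons a w)
  then have "a \<in> L" by simp
  then have ra: "\<forall>x y. dist (\<phi> a x) (\<phi> a y) = r a * dist x y" using assms(1) unfolding similarity_ifs_def by blast
  have IH: "\<forall>x y. dist (word_map \<phi> w x) (word_map \<phi> w y) = prod_list (map r w) * dist x y"
    using Cons by simp
  show ?case
  proof (intro allI)
    fix x y
    have "dist (word_map \<phi> (a # w) x) (word_map \<phi> (a # w) y) = dist (\<phi> a (word_map \<phi> w x)) (\<phi> a (word_map \<phi> w y))"
      by simp
    also have "\<dots> = r a * dist (word_map \<phi> w x) (word_map \<phi> w y)" using ra by blast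
    also have "\<dots> = r a * (prod_list (map r w) * dist x y)" using IH by simp
    finally show "dist (word_map \<phi> (a # w) x) (word_map \<phi> (a # w) y) = prod_list (map r (a # w)) * dist x y"
      by (simp add: mult.assoc)
  qed
qed

lemma prod_bounds:
  assumes "similarity_ifs L \<phi> r" "set w \<subseteq> L"
  shows "0 < prod_list (map r w) \<and> prod_list (map r w) \<le> Max (r ` L) ^ length w"
  using assms(2)
proof (induction w)
  case Nil then show ?case by simp
next
  case (Cons a w)
  then have a: "a \<in> L" by simp
  have fin: "finite L" using assms(1) unfolding similarity_ifs_def by blast
  have "0 < r a" using a assms(1) unfolding similarity_ifs_def by blast
  moreover have "r a \<le> Max (r ` L)" using a fin by simp
  moreover have "0 < prod_list (map r w)" "prod_list (map r w) \<le> Max (r ` L) ^ length w"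
    using Cons by auto
  ultimately have "r a * prod_list (map r w) \<le> Max (r ` L) * Max (r ` L) ^ length w"
    by (intro mult_mono) auto
  moreover have eqp: "prod_list (map r (a # w)) = r a * prod_list (map r w)" by simp
  moreover have "Max (r ` L) ^ length (a # w) = Max (r ` L) * Max (r ` L) ^ length w" by simp
  ultimately show ?case using \<open>0 < r a\<close> \<open>0 < prod_list (map r w)\<close>
    by (metis mult_pos_pos)
qed

lemma att_compact: "is_attractor L \<phi> K \<Longrightarrow> compact K"
  unfolding is_attractor_def by (elim conjE) assumption
lemma att_ne: "is_attractor L \<phi> K \<Longrightarrow> K \<noteq> {}"
  unfolding is_attractor_def by (elim conjE) assumption

lemma att_sub:
  assumes "is_attractor L \<phi> K" "a \<in> L"
  shows "\<phi> a ` K \<subseteq> K"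
proof -
  define U where "U = (\<Union>i\<in>L. \<phi> i ` K)"
  have e: "K = U" using assms(1) unfolding is_attractor_def U_def by (elim conjE) assumption
  have "\<phi> a ` K \<subseteq> U" unfolding U_def using assms(2) by blast
  then show ?thesis by (simp add: e[symmetric])
qed

lemma word_image_sub:
  assumes "is_attractor L \<phi> K" "set w \<subseteq> L"
  shows "word_map \<phi> w ` K \<subseteq> K"
  using assms(2)
proof (induction w)
  case Nil then show ?case by simp
next
  case (Cons a w)
  have "\<phi> a ` K \<subseteq> K" using att_sub[OF assms(1)] Cons.prems by simp
  moreover have "word_map \<phi> w ` K \<subseteq> K" using Cons by simp
  moreover have "word_map \<phi> (a # w) ` K = \<phi> a ` (word_map \<phi> w ` K)"
    by (simp add: image_comp)
  ultimately show ?case by blast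
qed



lemma rmax_props:
  assumes "similarity_ifs L \<phi> r"
  shows "Max (r ` L) < 1" "0 < Min (r ` L)" "\<And>i. i \<in> L \<Longrightarrow> Min (r ` L) \<le> r i"
proof -
  have fin: "finite L" and ne: "L \<noteq> {}" and rr: "\<forall>i\<in>L. 0 < r i \<and> r i < 1"
    using assms unfolding similarity_ifs_def by auto
  have "Max (r ` L) \<in> r ` L" using fin ne by simp
  thus "Max (r ` L) < 1" using rr by auto
  have "Min (r ` L) \<in> r ` L" using fin ne by simp
  thus "0 < Min (r ` L)" using rr by auto
  show "\<And>i. i \<in> L \<Longrightarrow> Min (r ` L) \<le> r i" using fin by simp
qed

lemma coding:
  assumes sim: "similarity_ifs L \<phi> r" and att: "is_attractor L \<phi> K" and j: "\<forall>n. j n \<in> L"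
  shows coding_in: "\<And>n. coding_map \<phi> K j \<in> word_map \<phi> (map j [0..<n]) ` K"
    and coding_uniq: "\<And>y. (\<forall>n. y \<in> word_map \<phi> (map j [0..<n]) ` K) \<Longrightarrow> y = coding_map \<phi> K j"
proof -
  define F where "F n = word_map \<phi> (map j [0..<n]) ` K" for n
  have setw: "set (map j [0..<n]) \<subseteq> L" for n using j by auto
  have Kc: "compact K" and Kne: "K \<noteq> {}" using att_compact[OF att] att_ne[OF att] by auto
  have Fc: "compact (F n)" for n
  proof -
    have "0 < prod_list (map r (map j [0..<n]))" using prod_bounds[OF sim setw] by blast
    then have "continuous_on K (word_map \<phi> (map j [0..<n]))"
      using sim_cont word_sim[OF sim setw] by blast
    thus ?thesis unfolding F_def using Kc by (rule compact_continuous_image)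
  qed
  have Fne: "F n \<noteq> {}" for n unfolding F_def using Kne by simp
  have Fsuc: "F (Suc n) \<subseteq> F n" for n
  proof -
    have "\<phi> (j n) ` K \<subseteq> K" using att_sub[OF att] j by blast
    hence "word_map \<phi> (map j [0..<n]) ` (\<phi> (j n) ` K) \<subseteq> F n" unfolding F_def by blast
    thus ?thesis unfolding F_def by (simp add: word_map_snoc image_comp)
  qed
  have mono: "m \<le> n \<Longrightarrow> F n \<subseteq> F m" for m n by (rule lift_Suc_antimono_le[of F, OF Fsuc])
  have ne: "\<Inter>(range F) \<noteq> {}" by (rule compact_nest[OF Fc Fne mono])
  define D where "D = diameter K"
  define M where "M = Max (r ` L)"
  have M1: "M < 1" unfolding M_def using rmax_props[OF sim] by simp
  have bnd: "dist x y \<le> M ^ n * D" if xF: "x \<in> F n" and yF: "y \<in> F n" for x y n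
  proof -
    obtain p where p: "p \<in> K" "x = word_map \<phi> (map j [0..<n]) p"
      using xF unfolding F_def by blast
    obtain q where q: "q \<in> K" "y = word_map \<phi> (map j [0..<n]) q"
      using yF unfolding F_def by blast
    have pb: "0 < prod_list (map r (map j [0..<n]))" "prod_list (map r (map j [0..<n])) \<le> M ^ n"
      using prod_bounds[OF sim setw, of n] unfolding M_def by auto
    have "dist p q \<le> D" unfolding D_def
      using diameter_bounded_bound[OF compact_imp_bounded[OF Kc] p(1) q(1)] .
    moreover have "0 \<le> dist p q" by simp
    moreover have "dist x y = prod_list (map r (map j [0..<n])) * dist p q"
      using word_sim[OF sim setw] p q by simp
    moreover have "prod_list (map r (map j [0..<n])) * dist p q \<le> M ^ n * D"
      using pb \<open>dist p q \<le> D\<close> by (intro mult_mono) auto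
    ultimately show ?thesis by simp
  qed
  have uniq: "x = y" if "x \<in> \<Inter>(range F)" "y \<in> \<Inter>(range F)" for x y
  proof (rule ccontr)
    assume "x \<noteq> y"
    hence dp: "dist x y > 0" by simp
    have D0: "D > 0"
    proof (rule ccontr)
      assume "\<not> D > 0"
      moreover have "dist x y \<le> D" using bnd[of x 0 y] that by auto
      ultimately show False using dp by linarith
    qed
    obtain n where "M ^ n < dist x y / D" using real_arch_pow_inv[of "dist x y / D" M] dp D0 M1 by auto
    hence "M ^ n * D < dist x y" using D0 by (simp add: field_simps)
    thus False using bnd[of x n y] that by auto
  qed
  have ex1: "\<exists>!x. x \<in> \<Inter>(range F)" using ne uniq by blast
  have cm: "coding_map \<phi> K j = (THE x. x \<in> \<Inter>(range F))"
    unfolding coding_map_def F_def by simp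
  have "coding_map \<phi> K j \<in> \<Inter>(range F)" unfolding cm by (rule theI'[OF ex1])
  thus "\<And>n. coding_map \<phi> K j \<in> word_map \<phi> (map j [0..<n]) ` K" unfolding F_def by auto
  show "\<And>y. (\<forall>n. y \<in> word_map \<phi> (map j [0..<n]) ` K) \<Longrightarrow> y = coding_map \<phi> K j"
  proof -
    fix y assume "\<forall>n. y \<in> word_map \<phi> (map j [0..<n]) ` K"
    hence "y \<in> \<Inter>(range F)" unfolding F_def by auto
    thus "y = coding_map \<phi> K j" using \<open>coding_map \<phi> K j \<in> \<Inter>(range F)\<close> uniq by blast
  qed
qed

lemma branch:
  assumes w: "w \<in> S" and step: "\<forall>v\<in>S. \<exists>a. v @ [a] \<in> S"
  obtains j where "map j [0..<length w] = w" "\<And>n. map j [0..<length w + n] \<in> S"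
proof -
  obtain nxt where nxt: "\<forall>v\<in>S. v @ [nxt v] \<in> S" using step by metis
  define u where "u = rec_nat w (\<lambda>_ v. v @ [nxt v])"
  have u0: "u 0 = w" and uS: "u (Suc n) = u n @ [nxt (u n)]" for n unfolding u_def by auto
  have uin: "u n \<in> S" for n by (induction n) (use w nxt u0 uS in auto)
  define j where "j k = (if k < length w then w ! k else nxt (u (k - length w)))" for k
  have jw: "map j [0..<length w] = w" by (rule nth_equalityI) (auto simp: j_def)
  have "map j [0..<length w + n] = u n" for n
  proof (induction n)
    case 0 then show ?case using jw u0 by simp
  next
    case (Suc n) then show ?case by (simp add: uS j_def)
  qed
  thus ?thesis using that jw uin by auto
qed



lemma word_compact:
  assumes sim: "similarity_ifs L \<phi> r" and att: "is_attractor L \<phi> K" and w: "set w \<subseteq> L"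
  shows "compact (word_map \<phi> w ` K)"
proof -
  have "0 < prod_list (map r w)" using prod_bounds[OF sim w] by blast
  then have "continuous_on K (word_map \<phi> w)"
    using sim_cont word_sim[OF sim w] by blast
  thus ?thesis using att_compact[OF att] by (rule compact_continuous_image)
qed

lemma tree_props:
  assumes "is_tree L T"
  shows tree_nil: "[] \<in> T" and tree_lists: "\<And>w. w \<in> T \<Longrightarrow> set w \<subseteq> L"
    and tree_take: "\<And>w n. w \<in> T \<Longrightarrow> take n w \<in> T"
  using assms unfolding is_tree_def by (auto simp: in_lists_conv_set)

lemma has_child:
  fixes \<phi> :: "'i \<Rightarrow> 'a::euclidean_space \<Rightarrow> 'a"
  assumes dif: "diffuse_tree L \<phi> K c T" and v: "v \<in> T"
  shows "\<exists>a. a \<in> L \<and> v @ [a] \<in> T"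
proof -
  obtain e :: 'a where e: "e \<in> Basis" using nonempty_Basis by blast
  have H: "affine_hyperplane {x. e \<bullet> x = 0}" unfolding affine_hyperplane_def
    using e nonzero_Basis by blast
  have "diffuse_words \<phi> K c ((\<lambda>a. [a]) ` children L T v)" using dif v unfolding diffuse_tree_def by blast
  then obtain u where "u \<in> (\<lambda>a. [a]) ` children L T v"
    using H unfolding diffuse_words_def by blast
  then show ?thesis unfolding children_def by blast
qed

lemma extend_boundary:
  fixes \<phi> :: "'i \<Rightarrow> 'a::euclidean_space \<Rightarrow> 'a"
  assumes tree: "is_tree L T" and dif: "diffuse_tree L \<phi> K c T" and w: "w \<in> T"
  obtains j where "j \<in> tree_boundary L T" "map j [0..<length w] = w"
proof -
  have step: "\<forall>v\<in>T. \<exists>a. v @ [a] \<in> T" using has_child[OF dif] by blast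
  obtain j where jw: "map j [0..<length w] = w" and jT: "\<And>n. map j [0..<length w + n] \<in> T"
    using branch[OF w step] by blast
  have all: "map j [0..<n] \<in> T" for n
  proof (cases "n \<le> length w")
    case True
    then have "map j [0..<n] = take n (map j [0..<length w])" by (simp add: take_map)
    then show ?thesis using jw tree_take[OF tree w] by simp
  next
    case False
    then have "n = length w + (n - length w)" by simp
    then show ?thesis using jT by metis
  qed
  have "j n \<in> L" for n
  proof -
    have "set (map j [0..<Suc n]) \<subseteq> L" using tree_lists[OF tree all] .
    thus ?thesis by simp
  qed
  then have "j \<in> tree_boundary L T" unfolding tree_boundary_def using all by blast
  then show ?thesis using that jw by blast
qed

lemma boundary_L: "j \<in> tree_boundary L T \<Longrightarrow> j n \<in> L"
  unfolding tree_boundary_def by blast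
lemma boundary_T: "j \<in> tree_boundary L T \<Longrightarrow> map j [0..<n] \<in> T"
  unfolding tree_boundary_def by blast

lemma closed_image:
  assumes sim: "similarity_ifs L \<phi> r" and att: "is_attractor L \<phi> K" and tree: "is_tree L T"
  shows "closed (coding_map \<phi> K ` tree_boundary L T)"
proof -
  let ?E = "coding_map \<phi> K ` tree_boundary L T"
  have finL: "finite L" using sim unfolding similarity_ifs_def by blast
  have "closure ?E \<subseteq> ?E"
  proof
    fix y assume y: "y \<in> closure ?E"
    define cyl where "cyl w = {j \<in> tree_boundary L T. map j [0..<length w] = w}" for w
    define S where "S = {w \<in> T. y \<in> closure (coding_map \<phi> K ` cyl w)}"
    have S0: "[] \<in> S" unfolding S_def cyl_def using y tree_nil[OF tree] by simp
    have stepS: "\<forall>v\<in>S. \<exists>a. v @ [a] \<in> S"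
    proof
      fix w assume wS: "w \<in> S"
      define C where "C = children L T w"
      have finC: "finite C" unfolding C_def children_def using finL by simp
      have sub: "coding_map \<phi> K ` cyl w \<subseteq> (\<Union>a\<in>C. coding_map \<phi> K ` cyl (w @ [a]))"
      proof
        fix z assume "z \<in> coding_map \<phi> K ` cyl w"
        then obtain j where j: "j \<in> tree_boundary L T" "map j [0..<length w] = w" and z: "z = coding_map \<phi> K j"
          unfolding cyl_def by blast
        have e: "map j [0..<length (w @ [j (length w)])] = w @ [j (length w)]" using j(2) by simp
        have "w @ [j (length w)] \<in> T" using boundary_T[OF j(1), of "Suc (length w)"] j(2) by simp
        hence "j (length w) \<in> C" unfolding C_def children_def using boundary_L[OF j(1)] by blast
        moreover have "j \<in> cyl (w @ [j (length w)])" unfolding cyl_def using j(1) e by blast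
        ultimately show "z \<in> (\<Union>a\<in>C. coding_map \<phi> K ` cyl (w @ [a]))" using z by blast
      qed
      have "closure (coding_map \<phi> K ` cyl w) \<subseteq> (\<Union>a\<in>C. closure (coding_map \<phi> K ` cyl (w @ [a])))"
      proof (rule closure_minimal)
        show "coding_map \<phi> K ` cyl w \<subseteq> (\<Union>a\<in>C. closure (coding_map \<phi> K ` cyl (w @ [a])))"
        proof (rule subset_trans[OF sub])
          show "(\<Union>a\<in>C. coding_map \<phi> K ` cyl (w @ [a])) \<subseteq> (\<Union>a\<in>C. closure (coding_map \<phi> K ` cyl (w @ [a])))"
            by (rule UN_mono) (simp_all add: closure_subset)
        qed
        show "closed (\<Union>a\<in>C. closure (coding_map \<phi> K ` cyl (w @ [a])))"
          using finC by (intro closed_UN) auto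
      qed
      moreover have "y \<in> closure (coding_map \<phi> K ` cyl w)" using wS unfolding S_def by simp
      ultimately have "y \<in> (\<Union>a\<in>C. closure (coding_map \<phi> K ` cyl (w @ [a])))" by (rule subsetD)
      then obtain a where a: "a \<in> C" "y \<in> closure (coding_map \<phi> K ` cyl (w @ [a]))"
        by (rule UN_E)
      have "w @ [a] \<in> T" using a(1) unfolding C_def children_def by blast
      then show "\<exists>a. w @ [a] \<in> S" using a unfolding S_def by blast
    qed
    obtain j where "map j [0..<length ([]::'i list)] = []" and jS: "\<And>n. map j [0..<length ([]::'i list) + n] \<in> S"
      by (rule branch[OF S0 stepS]) auto
    have jS': "map j [0..<n] \<in> S" for n using jS[of n] by simp
    have jT: "map j [0..<n] \<in> T" for n using jS' unfolding S_def by blast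
    have jL: "j n \<in> L" for n
    proof -
      have "set (map j [0..<Suc n]) \<subseteq> L" using tree_lists[OF tree jT] .
      thus ?thesis by simp
    qed
    have jB: "j \<in> tree_boundary L T" unfolding tree_boundary_def using jT jL by blast
    have "\<forall>n. y \<in> word_map \<phi> (map j [0..<n]) ` K"
    proof
      fix n
      let ?u = "map j [0..<n]"
      have "coding_map \<phi> K ` cyl ?u \<subseteq> word_map \<phi> ?u ` K"
      proof
        fix z assume "z \<in> coding_map \<phi> K ` cyl ?u"
        then obtain j' where j': "j' \<in> tree_boundary L T" "map j' [0..<n] = ?u" and z: "z = coding_map \<phi> K j'"
          unfolding cyl_def by auto
        have "z \<in> word_map \<phi> (map j' [0..<n]) ` K"
          unfolding z by (rule coding_in[OF sim att]) (use boundary_L[OF j'(1)] in blast)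
        thus "z \<in> word_map \<phi> ?u ` K" using j'(2) by simp
      qed
      moreover have "closed (word_map \<phi> ?u ` K)"
      proof -
        have "set ?u \<subseteq> L" using jL by auto
        thus ?thesis using word_compact[OF sim att] compact_imp_closed by blast
      qed
      ultimately have "closure (coding_map \<phi> K ` cyl ?u) \<subseteq> word_map \<phi> ?u ` K"
        by (rule closure_minimal)
      moreover have "y \<in> closure (coding_map \<phi> K ` cyl ?u)" using jS' unfolding S_def by blast
      ultimately show "y \<in> word_map \<phi> ?u ` K" by blast
    qed
    then have "y = coding_map \<phi> K j" using coding_uniq[OF sim att] jL by blast
    then show "y \<in> ?E" using jB by blast
  qed
  then show ?thesis using closure_subset_eq by blast
qed



theorem proposition3p11:
  fixes L :: "'i set" and \<phi> :: "'i \<Rightarrow> 'a::euclidean_space \<Rightarrow> 'a" and r :: "'i \<Rightarrow> real"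
    and K :: "'a set" and T :: "'i list set" and c :: real
  assumes "similarity_ifs L \<phi> r"
    and "is_attractor L \<phi> K"
    and "is_tree L T"
    and "c > 0"
    and "diffuse_tree L \<phi> K c T"
  shows "hyperplane_diffuse (coding_map \<phi> K ` tree_boundary L T) (c * Min (r ` L) / diameter K)"
proof -
  note sim = assms(1) and att = assms(2) and tree = assms(3) and cpos = assms(4) and dif = assms(5)
  define E where "E = coding_map \<phi> K ` tree_boundary L T"
  define \<rho> where "\<rho> = Min (r ` L)"
  define D where "D = diameter K"
  define M where "M = Max (r ` L)"
  have cl: "closed E" unfolding E_def by (rule closed_image[OF sim att tree])
  have \<rho>pos: "0 < \<rho>" unfolding \<rho>_def using rmax_props[OF sim] by simp
  have \<rho>le: "\<And>i. i \<in> L \<Longrightarrow> \<rho> \<le> r i" unfolding \<rho>_def using rmax_props[OF sim] by simp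
  have M1: "M < 1" unfolding M_def using rmax_props[OF sim] by simp
  have Kc: "compact K" by (rule att_compact[OF att])
  have D0: "0 \<le> D" unfolding D_def by (rule diameter_ge_0[OF compact_imp_bounded[OF Kc]])
  have Dbound: "\<And>p q. p \<in> K \<Longrightarrow> q \<in> K \<Longrightarrow> dist p q \<le> D"
    unfolding D_def using diameter_bounded_bound[OF compact_imp_bounded[OF Kc]] by blast
  show ?thesis
  proof (cases "D = 0")
    case True
    have "E \<inter> ball x \<xi> - open_nbhd H (c * \<rho> / D * \<xi>) \<noteq> {}" if "0 < \<xi>" "x \<in> E" for \<xi> x H
    proof -
      have "open_nbhd H (c * \<rho> / D * \<xi>) = {}" unfolding open_nbhd_def using True by simp
      moreover have "x \<in> E \<inter> ball x \<xi>" using that by simp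
      ultimately show ?thesis by blast
    qed
    then show ?thesis unfolding hyperplane_diffuse_def E_def[symmetric] \<rho>_def[symmetric] D_def[symmetric]
      using cl by (intro conjI exI[of _ 1]) auto
  next
    case False
    with D0 have Dpos: "0 < D" by simp
    have main: "E \<inter> ball x \<xi> - open_nbhd H (c * \<rho> / D * \<xi>) \<noteq> {}"
      if \<xi>: "0 < \<xi>" "\<xi> < D" and xE: "x \<in> E" and H: "affine_hyperplane H" for \<xi> x H
    proof -
      obtain j where jB: "j \<in> tree_boundary L T" and x: "x = coding_map \<phi> K j" using xE unfolding E_def by blast
      have jL: "\<And>n. j n \<in> L" using boundary_L[OF jB] .
      have jT: "\<And>n. map j [0..<n] \<in> T" using boundary_T[OF jB] .
      have setj: "\<And>n. set (map j [0..<n]) \<subseteq> L" using jL by auto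
      define p where "p n = prod_list (map r (map j [0..<n]))" for n
      have ppos: "\<And>n. 0 < p n" and pM: "\<And>n. p n \<le> M ^ n"
        unfolding p_def M_def using prod_bounds[OF sim setj] by auto
      define P where "P n \<longleftrightarrow> p n * D < \<xi>" for n
      have exP: "\<exists>n. P n"
      proof -
        obtain n where "M ^ n < \<xi> / D" using real_arch_pow_inv[of "\<xi> / D" M] \<xi> Dpos M1 by auto
        hence "M ^ n * D < \<xi>" using Dpos by (simp add: field_simps)
        moreover have "p n * D \<le> M ^ n * D" using pM Dpos by (simp add: mult_right_mono)
        ultimately show ?thesis unfolding P_def by (meson le_less_trans)
      qed
      define n where "n = (LEAST n. P n)"
      have Pn: "P n" unfolding n_def using exP by (rule LeastI_ex)
      have "n \<noteq> 0"
      proof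
        assume "n = 0"
        hence "p 0 * D < \<xi>" using Pn unfolding P_def by simp
        thus False using \<xi> unfolding p_def by simp
      qed
      then obtain m where nm: "n = Suc m" by (cases n) auto
      have nPm: "\<not> P m" unfolding n_def using nm n_def not_less_Least[of m P] by simp
      define w where "w = map j [0..<n]"
      have wT: "w \<in> T" unfolding w_def by (rule jT)
      have wL: "set w \<subseteq> L" unfolding w_def by (rule setj)
      define f where "f = word_map \<phi> w"
      have pn: "p n = p m * r (j m)" unfolding p_def nm by simp
      have rw: "prod_list (map r w) = p n" unfolding w_def p_def by simp
      have fsim: "\<forall>x y. dist (f x) (f y) = p n * dist x y"
        unfolding f_def using word_sim[OF sim wL] rw by simp
      have fsurj: "surj f" using sim_surj[OF ppos fsim] .
      have H': "affine_hyperplane (f -` H)" using sim_hyper[OF ppos fsim H] .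
      have "diffuse_words \<phi> K c ((\<lambda>a. [a]) ` children L T w)"
        using dif wT unfolding diffuse_tree_def by blast
      then obtain u where u: "u \<in> (\<lambda>a. [a]) ` children L T w" and
        uK: "word_map \<phi> u ` K \<inter> open_nbhd (f -` H) c = {}"
        using H' unfolding diffuse_words_def by blast
      then obtain a where a: "a \<in> children L T w" and ua: "u = [a]" by blast
      have aK: "\<phi> a ` K \<inter> open_nbhd (f -` H) c = {}" using uK ua by simp
      have waT: "w @ [a] \<in> T" using a unfolding children_def by blast
      obtain j' where j'B: "j' \<in> tree_boundary L T" and j'w: "map j' [0..<length (w @ [a])] = w @ [a]"
        using extend_boundary[OF tree dif waT] by blast
      define y where "y = coding_map \<phi> K j'"
      have yE: "y \<in> E" unfolding y_def E_def using j'B by blast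
      have "y \<in> word_map \<phi> (map j' [0..<length (w @ [a])]) ` K"
        unfolding y_def by (rule coding_in[OF sim att]) (use boundary_L[OF j'B] in blast)
      hence "y \<in> f ` (\<phi> a ` K)" unfolding j'w f_def by (simp add: word_map_snoc image_comp)
      then obtain z where zA: "z \<in> \<phi> a ` K" and yz: "y = f z" by blast
      have aL: "a \<in> L" using a unfolding children_def by blast
      have zK: "z \<in> K" using zA att_sub[OF att aL] by blast
      have "x \<in> word_map \<phi> (map j [0..<n]) ` K"
        unfolding x by (rule coding_in[OF sim att]) (use jL in blast)
      then obtain q where qK: "q \<in> K" and xq: "x = f q" unfolding f_def w_def by blast
      have "dist x y = p n * dist q z" using fsim xq yz by simp
      also have "\<dots> \<le> p n * D" using Dbound[OF qK zK] ppos[of n] by (simp add: mult_left_mono)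
      also have "\<dots> < \<xi>" using Pn unfolding P_def .
      finally have yball: "y \<in> ball x \<xi>" by simp
      have bnd: "c * \<rho> / D * \<xi> \<le> c * p n"
      proof -
        have "\<xi> \<le> p m * D" using nPm unfolding P_def by simp
        hence "\<xi> / D \<le> p m" using Dpos by (simp add: field_simps)
        hence "c * \<rho> * (\<xi> / D) \<le> c * \<rho> * p m" by (rule mult_left_mono) (use cpos \<rho>pos in simp)
        also have "\<dots> \<le> c * (p m * r (j m))"
          using \<rho>le[OF jL[of m]] cpos ppos[of m] by (simp add: mult_left_mono mult.commute mult.left_commute)
        finally show ?thesis using pn by (simp add: mult.commute mult.left_commute)
      qed
      have ynot: "y \<notin> open_nbhd H (c * \<rho> / D * \<xi>)"
      proof
        assume "y \<in> open_nbhd H (c * \<rho> / D * \<xi>)"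
        then obtain h where hH: "h \<in> H" and dh: "dist y h < c * \<rho> / D * \<xi>" unfolding open_nbhd_def by blast
        obtain h' where hh: "h = f h'" using fsurj by (metis surjD)
        have h'H: "h' \<in> f -` H" using hH hh by simp
        have "p n * dist z h' < c * p n" using dh bnd fsim yz hh by simp
        hence "dist z h' < c" using ppos[of n] by (simp add: mult.commute)
        hence "z \<in> open_nbhd (f -` H) c" unfolding open_nbhd_def using h'H by blast
        thus False using aK zA by blast
      qed
      show ?thesis using yE yball ynot by blast
    qed
    show ?thesis unfolding hyperplane_diffuse_def E_def[symmetric] \<rho>_def[symmetric] D_def[symmetric]
      using cl Dpos main by (intro conjI exI[of _ D]) auto
  qed
qed


end
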